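(* Let $L$ be a finite language over a $k$-letter alphabet accepted by a layered NFA of width $\omega$ and length $n$ with $f$ final states. Then $L$ can be described by a regular expression of length $\mathrm{rpn}(L) \leq O\big( f k n \omega \cdot \omega^{\log n} \big)$.
   Context: An NFA for a finite language is layered if its set of states admits a partition $Q_0\cup Q_1\cup\dots\cup Q_n$ such that every word of length $j$ leads (from the initial state) only to states in $Q_j$; $Q_j$ is the $j$-th layer. Its width is $\omega=\max_{0\le j\le n}|Q_j|$ and its length is the length $n$ of its longest path. Regular expressions are built from $\epsilon$ and letters by union and concatenation; $\mathrm{rpn}(R)$ is the number of nodes in the syntax tree of $R$, and $\mathrm{rpn}(L)$ is the minimum over expressions describing $L$. Logarithms are base 2; the constant in $O(\cdot)$ is absolute. *)

theory Defs
  imports Complex_Main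
begin

datatype 'a rexp = Eps | Sym 'a | Union "'a rexp" "'a rexp" | Conc "'a rexp" "'a rexp"

fun lang :: "'a rexp \<Rightarrow> 'a list set" where
  "lang Eps = {[]}"
| "lang (Sym a) = {[a]}"
| "lang (Union r s) = lang r \<union> lang s"
| "lang (Conc r s) = {u @ v | u v. u \<in> lang r \<and> v \<in> lang s}"

fun rpn :: "'a rexp \<Rightarrow> nat" where
  "rpn Eps = 1"
| "rpn (Sym a) = 1"
| "rpn (Union r s) = 1 + rpn r + rpn s"
| "rpn (Conc r s) = 1 + rpn r + rpn s"

definition rpn_lang :: "'a list set \<Rightarrow> nat" where
  "rpn_lang L = (LEAST m. \<exists>r. lang r = L \<and> rpn r = m)"

fun reach :: "('s \<times> 'a \<times> 's) set \<Rightarrow> 's \<Rightarrow> 'a list \<Rightarrow> 's set" where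
  "reach \<delta> q [] = {q}"
| "reach \<delta> q (a # w) = (\<Union>p \<in> {p. (q, a, p) \<in> \<delta>}. reach \<delta> p w)"

definition nfa :: "'s set \<Rightarrow> 'a set \<Rightarrow> ('s \<times> 'a \<times> 's) set \<Rightarrow> 's \<Rightarrow> 's set \<Rightarrow> bool" where
  "nfa Q \<Sigma> \<delta> q0 F \<longleftrightarrow> finite Q \<and> finite \<Sigma> \<and> q0 \<in> Q \<and> F \<subseteq> Q \<and> \<delta> \<subseteq> Q \<times> \<Sigma> \<times> Q"

definition accepted :: "('s \<times> 'a \<times> 's) set \<Rightarrow> 's \<Rightarrow> 's set \<Rightarrow> 'a list set" where
  "accepted \<delta> q0 F = {w. reach \<delta> q0 w \<inter> F \<noteq> {}}"

definition nfa_length :: "('s \<times> 'a \<times> 's) set \<Rightarrow> 's \<Rightarrow> nat" where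
  "nfa_length \<delta> q0 = (GREATEST m. \<exists>w. length w = m \<and> reach \<delta> q0 w \<noteq> {})"

text \<open>Layering: the function lay assigns each state its layer, i.e. the partition
  Q = Q_0 \<union> ... \<union> Q_n with Q_j = {q \<in> Q. lay q = j}, where n is the length;
  every word of length j leads only to states of Q_j.\<close>
definition layering :: "'s set \<Rightarrow> ('s \<times> 'a \<times> 's) set \<Rightarrow> 's \<Rightarrow> ('s \<Rightarrow> nat) \<Rightarrow> bool" where
  "layering Q \<delta> q0 lay \<longleftrightarrow>
     (\<forall>q\<in>Q. lay q \<le> nfa_length \<delta> q0) \<and>
     (\<forall>w q. q \<in> reach \<delta> q0 w \<longrightarrow> lay q = length w)"

definition width :: "'s set \<Rightarrow> ('s \<times> 'a \<times> 's) set \<Rightarrow> 's \<Rightarrow> ('s \<Rightarrow> nat) \<Rightarrow> nat" where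
  "width Q \<delta> q0 lay = Max ((\<lambda>j. card {q \<in> Q. lay q = j}) ` {0..nfa_length \<delta> q0})"

end

theory Submission
  imports Defs
begin

definition rep :: "'a list set \<Rightarrow> nat \<Rightarrow> bool" where
  "rep L s \<longleftrightarrow> L = {} \<or> (\<exists>r. lang r = L \<and> rpn r \<le> s)"

definition cc :: "'a list set \<Rightarrow> 'a list set \<Rightarrow> 'a list set" where
  "cc A B = {u @ v | u v. u \<in> A \<and> v \<in> B}"

lemma rep_mono: "rep L s \<Longrightarrow> s \<le> t \<Longrightarrow> rep L t"
  unfolding rep_def by auto

lemma rep_empty: "rep {} s" unfolding rep_def by auto

lemma rep_un: "rep A a \<Longrightarrow> rep B b \<Longrightarrow> rep (A \<union> B) (a + b + 1)"
  unfolding rep_def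
proof (elim disjE exE conjE)
  fix r s assume "lang r = A" "rpn r \<le> a" "lang s = B" "rpn s \<le> b"
  then show "A \<union> B = {} \<or> (\<exists>r. lang r = A \<union> B \<and> rpn r \<le> a + b + 1)"
    by (intro disjI2 exI[of _ "Union r s"]) auto
qed auto

lemma rep_cc: "rep A a \<Longrightarrow> rep B b \<Longrightarrow> rep (cc A B) (a + b + 1)"
  unfolding rep_def cc_def
proof (elim disjE exE conjE)
  fix r s assume "lang r = A" "rpn r \<le> a" "lang s = B" "rpn s \<le> b"
  then show "{u @ v |u v. u \<in> A \<and> v \<in> B} = {} \<or> (\<exists>r. lang r = {u @ v |u v. u \<in> A \<and> v \<in> B} \<and> rpn r \<le> a + b + 1)"
    by (intro disjI2 exI[of _ "Conc r s"]) auto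
qed auto

lemma rep_UN: "finite I \<Longrightarrow> (\<And>i. i \<in> I \<Longrightarrow> rep (A i) s) \<Longrightarrow> rep (\<Union>i\<in>I. A i) (card I * (s + 1))"
proof (induction I rule: finite_induct)
  case empty then show ?case by (simp add: rep_empty)
next
  case (insert x F)
  have "rep (A x \<union> (\<Union>i\<in>F. A i)) (s + card F * (s + 1) + 1)"
    using insert by (intro rep_un) auto
  then show ?case using insert by (simp add: algebra_simps)
qed

lemma rep_UN': "finite I \<Longrightarrow> card I \<le> m \<Longrightarrow> (\<And>i. i \<in> I \<Longrightarrow> rep (A i) s) \<Longrightarrow> rep (\<Union>i\<in>I. A i) (m * (s + 1))"
proof -
  assume a: "finite I" "card I \<le> m" "\<And>i. i \<in> I \<Longrightarrow> rep (A i) s"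
  have "card I * (s + 1) \<le> m * (s + 1)" using a(2) by (rule mult_le_mono1)
  then show ?thesis using rep_UN[of I A s, OF a(1) a(3)] rep_mono by blast
qed

lemma reach_append: "reach \<delta> p (u @ v) = (\<Union>r\<in>reach \<delta> p u. reach \<delta> r v)"
  by (induction u arbitrary: p) auto

lemma reach_sub: "\<delta> \<subseteq> Q \<times> S \<times> Q \<Longrightarrow> p \<in> Q \<Longrightarrow> reach \<delta> p w \<subseteq> Q"
  by (induction w arbitrary: p) auto

definition W :: "('s \<times> 'a \<times> 's) set \<Rightarrow> 's \<Rightarrow> nat \<Rightarrow> 's \<Rightarrow> 'a list set" where
  "W \<delta> p d q = {w. length w = d \<and> q \<in> reach \<delta> p w}"

lemma W_split:
  assumes lay: "\<forall>w q. q \<in> reach \<delta> q0 w \<longrightarrow> lay q = length w"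
    and sub: "\<delta> \<subseteq> Q \<times> S \<times> Q" and q0: "q0 \<in> Q"
    and p: "p \<in> reach \<delta> q0 x"
  shows "W \<delta> p (d1 + d2) q = (\<Union>r\<in>{r\<in>Q. lay r = length x + d1}. cc (W \<delta> p d1 r) (W \<delta> r d2 q))"
proof (intro equalityI subsetI)
  fix w assume "w \<in> W \<delta> p (d1 + d2) q"
  then have len: "length w = d1 + d2" and q: "q \<in> reach \<delta> p w" by (auto simp: W_def)
  define u where "u = take d1 w"
  define v where "v = drop d1 w"
  have w: "w = u @ v" and lu: "length u = d1" and lv: "length v = d2"
    using len by (auto simp: u_def v_def)
  from q obtain r where r: "r \<in> reach \<delta> p u" "q \<in> reach \<delta> r v"
    unfolding w reach_append by auto
  have rr: "r \<in> reach \<delta> q0 (x @ u)" using r p by (auto simp: reach_append)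
  then have "lay r = length x + d1" using lay lu by force
  moreover have "r \<in> Q" using reach_sub[OF sub q0] rr by blast
  moreover have "w \<in> cc (W \<delta> p d1 r) (W \<delta> r d2 q)"
    using r lu lv w by (auto simp: cc_def W_def)
  ultimately show "w \<in> (\<Union>r\<in>{r\<in>Q. lay r = length x + d1}. cc (W \<delta> p d1 r) (W \<delta> r d2 q))" by blast
next
  fix w assume "w \<in> (\<Union>r\<in>{r\<in>Q. lay r = length x + d1}. cc (W \<delta> p d1 r) (W \<delta> r d2 q))"
  then show "w \<in> W \<delta> p (d1 + d2) q"
    by (auto simp: cc_def W_def reach_append)
qed

lemma W_one: "W \<delta> p 1 q = (\<Union>a\<in>\<Sigma>. (if (p, a, q) \<in> \<delta> then {[a]} else {}))"
  if "\<delta> \<subseteq> Q \<times> \<Sigma> \<times> Q"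
  using that by (auto simp: W_def length_Suc_conv split: if_splits)

lemma rep_sing: "rep {[a]} 1"
  unfolding rep_def by (intro disjI2 exI[of _ "Sym a"]) auto

lemma main_ind:
  assumes lay: "\<forall>w q. q \<in> reach \<delta> q0 w \<longrightarrow> lay q = length w"
    and sub: "\<delta> \<subseteq> Q \<times> \<Sigma> \<times> Q" and q0: "q0 \<in> Q"
    and fin: "finite Q" "finite \<Sigma>"
    and k: "card \<Sigma> \<ge> 1" and om: "\<omega> \<ge> 1"
    and layc: "\<And>j. card {q\<in>Q. lay q = j} \<le> \<omega>"
  shows "\<forall>d p q x. 1 \<le> d \<longrightarrow> d \<le> 2 ^ c \<longrightarrow> p \<in> reach \<delta> q0 x \<longrightarrow>
     (\<exists>s. rep (W \<delta> p d q) s \<and> s + 2 \<le> 4 * card \<Sigma> * (2 * \<omega>) ^ c)"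
proof (induction c)
  case 0
  show ?case
  proof (intro allI impI)
    fix d :: nat and p q x assume "1 \<le> d" "d \<le> (2::nat) ^ 0"
    then have d: "d = 1" by simp
    have "rep (W \<delta> p d q) (card \<Sigma> * (1 + 1))"
      unfolding d W_one[OF sub]
      by (rule rep_UN) (auto simp: fin rep_sing[simplified] rep_empty)
    moreover have "card \<Sigma> * (1 + 1) + 2 \<le> 4 * card \<Sigma> * (2 * \<omega>) ^ 0" using k by simp
    ultimately show "\<exists>s. rep (W \<delta> p d q) s \<and> s + 2 \<le> 4 * card \<Sigma> * (2 * \<omega>) ^ 0" by blast
  qed
next
  case (Suc c)
  define K where "K = 4 * card \<Sigma> * (2 * \<omega>) ^ c"
  have P1: "(2 * \<omega>) ^ c \<ge> 1" using om by simp
  have "1 * 1 \<le> card \<Sigma> * (2 * \<omega>) ^ c" by (rule mult_le_mono[OF k P1])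
  then have K4: "K \<ge> 4" unfolding K_def by simp
  have KS: "4 * card \<Sigma> * (2 * \<omega>) ^ Suc c = 2 * \<omega> * K" unfolding K_def by simp
  show ?case
  proof (intro allI impI)
    fix d :: nat and p q x assume d1: "1 \<le> d" and d2: "d \<le> 2 ^ Suc c" and p: "p \<in> reach \<delta> q0 x"
    show "\<exists>s. rep (W \<delta> p d q) s \<and> s + 2 \<le> 4 * card \<Sigma> * (2 * \<omega>) ^ Suc c"
    proof (cases "d \<le> 2 ^ c")
      case True
      then obtain s where "rep (W \<delta> p d q) s" "s + 2 \<le> K" using Suc.IH d1 p unfolding K_def by blast
      moreover have "K \<le> 2 * \<omega> * K" using om by simp
      ultimately show ?thesis unfolding KS using le_trans by blast
    next
      case False
      define e where "e = d - 2 ^ c"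
      have de: "d = 2 ^ c + e" and e1: "1 \<le> e" and e2: "e \<le> 2 ^ c" using False d2 by (auto simp: e_def)
      define t where "t = K - 2"
      have Kt: "K = t + 2" using K4 unfolding t_def by simp
      have trm: "rep (cc (W \<delta> p (2 ^ c) r) (W \<delta> r e q)) (t + t + 1)" for r
      proof (cases "W \<delta> p (2 ^ c) r = {}")
        case True
        then show ?thesis by (simp add: cc_def rep_empty)
      next
        case False
        then obtain u where u: "length u = 2 ^ c" "r \<in> reach \<delta> p u" by (auto simp: W_def)
        have r: "r \<in> reach \<delta> q0 (x @ u)" using u p by (auto simp: reach_append)
        obtain s1 where s1: "rep (W \<delta> p (2 ^ c) r) s1" "s1 + 2 \<le> K"
          using Suc.IH p unfolding K_def by (meson le_refl one_le_numeral one_le_power)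
        obtain s2 where s2: "rep (W \<delta> r e q) s2" "s2 + 2 \<le> K"
          using Suc.IH r e1 e2 unfolding K_def by blast
        have "rep (cc (W \<delta> p (2 ^ c) r) (W \<delta> r e q)) (s1 + s2 + 1)" using s1 s2 by (intro rep_cc)
        then show ?thesis by (rule rep_mono) (use s1 s2 Kt in simp)
      qed
      have "rep (W \<delta> p d q) (\<omega> * (t + t + 1 + 1))"
        unfolding de W_split[OF lay sub q0 p]
        by (rule rep_UN') (use fin layc trm in auto)
      moreover have "\<omega> * (t + t + 1 + 1) + 2 \<le> 2 * \<omega> * K"
        unfolding Kt using om by (simp add: algebra_simps)
      ultimately show ?thesis unfolding KS by blast
    qed
  qed
qed

lemma nfa_length_empty: "nfa_length ({}::('s \<times> 'a \<times> 's) set) (q0::'s) = 0"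
proof -
  have "\<And>y. (\<exists>w::'a list. length w = y \<and> reach ({}::('s \<times> 'a \<times> 's) set) q0 w \<noteq> {}) \<Longrightarrow> y \<le> 0"
  proof -
    fix y :: nat assume "\<exists>w::'a list. length w = y \<and> reach ({}::('s \<times> 'a \<times> 's) set) q0 w \<noteq> {}"
    then obtain w :: "'a list" where "length w = y" "reach ({}::('s \<times> 'a \<times> 's) set) q0 w \<noteq> {}" by blast
    then show "y \<le> 0" by (cases w) auto
  qed
  then show ?thesis unfolding nfa_length_def
    by (intro Greatest_equality) (auto intro: exI[of _ "[]"])
qed

lemma real_part:
  fixes n \<omega> :: nat
  assumes n: "n \<ge> 1" and om: "\<omega> \<ge> 1"
  defines "c \<equiv> nat \<lceil>log 2 (real n)\<rceil>"
  shows "n \<le> 2 ^ c" and "real (2 ^ c) \<le> 2 * real n"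
    and "real \<omega> ^ c \<le> real \<omega> * real \<omega> powr log 2 (real n)"
proof -
  define l where "l = log 2 (real n)"
  have l0: "l \<ge> 0" using n unfolding l_def by simp
  have rc: "real c = \<lceil>l\<rceil>" unfolding c_def l_def[symmetric] using l0 by simp
  have c1: "real c \<ge> l" "real c \<le> l + 1" unfolding rc by linarith+
  have "real n = 2 powr l" unfolding l_def using n by simp
  also have "\<dots> \<le> 2 powr real c" using c1 by (intro powr_mono) auto
  also have "\<dots> = real (2 ^ c)" by (simp add: powr_realpow)
  finally show "n \<le> 2 ^ c" by linarith
  have "real (2 ^ c) = 2 powr real c" by (simp add: powr_realpow)
  also have "\<dots> \<le> 2 powr (l + 1)" using c1 by (intro powr_mono) auto
  also have "\<dots> = 2 * real n" unfolding l_def using n by (simp add: powr_add)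
  finally show "real (2 ^ c) \<le> 2 * real n" .
  have "real \<omega> ^ c = real \<omega> powr real c" using om by (simp add: powr_realpow)
  also have "\<dots> \<le> real \<omega> powr (l + 1)" using c1 om by (intro powr_mono) auto
  also have "\<dots> = real \<omega> * real \<omega> powr l" using om by (simp add: powr_add)
  finally show "real \<omega> ^ c \<le> real \<omega> * real \<omega> powr log 2 (real n)" unfolding l_def .
qed

lemma rep_eps: "rep {[]} 1"
  unfolding rep_def by (intro disjI2 exI[of _ Eps]) auto

theorem proposition3p2:
  "\<exists>C::real. \<forall>(Q::nat set) (\<Sigma>::nat set) \<delta> q0 F lay.
     nfa Q \<Sigma> \<delta> q0 F \<and> layering Q \<delta> q0 lay \<and>
     nfa_length \<delta> q0 \<ge> 1 \<and> accepted \<delta> q0 F \<noteq> {} \<longrightarrow>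
     real (rpn_lang (accepted \<delta> q0 F)) \<le>
       C * real (card F) * real (card \<Sigma>) * real (nfa_length \<delta> q0) * real (width Q \<delta> q0 lay)
         * real (width Q \<delta> q0 lay) powr log 2 (real (nfa_length \<delta> q0))"
proof (intro exI[of _ 16] allI impI, elim conjE)
  fix Q \<Sigma> :: "nat set" and \<delta> :: "(nat \<times> nat \<times> nat) set" and q0 F lay
  assume A: "nfa Q \<Sigma> \<delta> q0 F" and B: "layering Q \<delta> q0 lay"
    and n1: "nfa_length \<delta> q0 \<ge> 1" and ne: "accepted \<delta> q0 F \<noteq> {}"
  define n where "n = nfa_length \<delta> q0"
  define \<omega> where "\<omega> = width Q \<delta> q0 lay"
  define k where "k = card \<Sigma>"
  have finQ: "finite Q" and finS: "finite \<Sigma>" and q0: "q0 \<in> Q" and FQ: "F \<subseteq> Q"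
    and sub: "\<delta> \<subseteq> Q \<times> \<Sigma> \<times> Q" using A unfolding nfa_def by auto
  have layQ: "\<And>q. q \<in> Q \<Longrightarrow> lay q \<le> n" and lay: "\<forall>w q. q \<in> reach \<delta> q0 w \<longrightarrow> lay q = length w"
    using B unfolding layering_def n_def by auto
  have layc: "card {q\<in>Q. lay q = j} \<le> \<omega>" for j
  proof (cases "j \<le> n")
    case True
    then show ?thesis unfolding \<omega>_def width_def n_def[symmetric]
      by (intro Max_ge) auto
  next
    case False
    then have "{q\<in>Q. lay q = j} = {}" using layQ by force
    then have "card {q\<in>Q. lay q = j} = 0" by (simp only: card.empty)
    then show ?thesis by simp
  qed
  have "q0 \<in> reach \<delta> q0 []" by simp
  then have lq0: "lay q0 = 0" using lay by fastforce
  have "q0 \<in> {q\<in>Q. lay q = 0}" using q0 lq0 by simp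
  moreover have "finite {q\<in>Q. lay q = 0}" using finQ by simp
  ultimately have "0 < card {q\<in>Q. lay q = 0}" using card_gt_0_iff by blast
  then have "1 \<le> card {q\<in>Q. lay q = 0}" by simp
  then have om: "\<omega> \<ge> 1" using layc[of 0] by linarith
  have k: "k \<ge> 1"
  proof (rule ccontr)
    assume "\<not> k \<ge> 1"
    then have "card \<Sigma> = 0" unfolding k_def by simp
    then have "\<Sigma> = {}" using finS by simp
    then have "\<delta> = {}" using sub by auto
    then show False using n1 by (simp add: nfa_length_empty)
  qed
  define c where "c = nat \<lceil>log 2 (real n)\<rceil>"
  have n1': "n \<ge> 1" using n1 n_def by simp
  note RP = real_part[OF n1' om, folded c_def]
  define K where "K = 4 * k * (2 * \<omega>) ^ c"
  note MI = main_ind[OF lay sub q0 finQ finS k[unfolded k_def] om layc, of c, folded k_def K_def]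
  have accW: "accepted \<delta> q0 F = (\<Union>f\<in>F. W \<delta> q0 (lay f) f)"
    using lay unfolding accepted_def W_def by auto
  have P1: "(2 * \<omega>) ^ c \<ge> 1" using om by simp
  have "1 * 1 \<le> k * (2 * \<omega>) ^ c" by (rule mult_le_mono[OF k P1])
  then have K1: "1 \<le> K" unfolding K_def by simp
  have repf: "rep (W \<delta> q0 (lay f) f) K" if f: "f \<in> F" for f
  proof (cases "lay f = 0")
    case True
    have "W \<delta> q0 (lay f) f = (if f = q0 then {[]} else {})"
      unfolding True W_def by auto
    moreover have "rep ({[]}::nat list set) K" using rep_mono[OF rep_eps K1] .
    ultimately show ?thesis by (simp add: rep_empty)
  next
    case False
    have "lay f \<le> 2 ^ c" using layQ[of f] f FQ RP(1) by auto
    then obtain s where "rep (W \<delta> q0 (lay f) f) s" "s + 2 \<le> K"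
    proof -
      have "q0 \<in> reach \<delta> q0 []" by simp
      moreover have "1 \<le> lay f" using False by simp
      ultimately have "\<exists>s. rep (W \<delta> q0 (lay f) f) s \<and> s + 2 \<le> K"
        using MI \<open>lay f \<le> 2 ^ c\<close> unfolding K_def by blast
      then show ?thesis using that by blast
    qed
    then show ?thesis using rep_mono[of _ s K] by simp
  qed
  have "rep (accepted \<delta> q0 F) (card F * (K + 1))"
    unfolding accW by (rule rep_UN) (use repf finite_subset[OF FQ finQ] in auto)
  then obtain r where r: "lang r = accepted \<delta> q0 F" "rpn r \<le> card F * (K + 1)"
    using ne unfolding rep_def by blast
  have "rpn_lang (accepted \<delta> q0 F) \<le> rpn r"
    unfolding rpn_lang_def by (rule Least_le) (use r in blast)
  then have "real (rpn_lang (accepted \<delta> q0 F)) \<le> real (card F * (K + 1))" using r by linarith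
  also have "\<dots> \<le> real (card F) * (2 * real K)"
  proof -
    have "real (card F) * 1 \<le> real (card F) * real K" using K1 by (intro mult_left_mono) auto
    then show ?thesis by (simp add: algebra_simps)
  qed
  also have "\<dots> = 8 * real (card F) * real k * real (2 ^ c) * real \<omega> ^ c"
    unfolding K_def by (simp add: power_mult_distrib)
  also have "\<dots> \<le> 8 * real (card F) * real k * (2 * real n) * (real \<omega> * real \<omega> powr log 2 (real n))"
    by (intro mult_mono RP(2) RP(3)) auto
  finally show "real (rpn_lang (accepted \<delta> q0 F)) \<le> 16 * real (card F) * real (card \<Sigma>) * real (nfa_length \<delta> q0) * real (width Q \<delta> q0 lay)
         * real (width Q \<delta> q0 lay) powr log 2 (real (nfa_length \<delta> q0))"
    unfolding k_def n_def \<omega>_def by (simp add: algebra_simps)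
qed

end
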